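(* Let $\alpha\in\mathbb N$. Define the polynomials $$p_n^{(\alpha)}(x)=\binom{\alpha+n-1}{n}_{\mathbb F}\,p_n(x\phi;q^{\alpha-1},1;q),\quad n\ge 0.$$ Then $$p_n^{(\alpha)}(x)=\sum_{k=0}^n(-1)^{kn-\binom{k}{2}}\binom{n}{k}_{\mathbb F}\binom{\alpha+n+k-1}{n}_{\mathbb F}x^k,$$ and $$\int p_n^{(\alpha)}(x)p_m^{(\alpha)}(x)\,d\mu_\alpha(x)=\delta_{n,m}(-1)^{\alpha n}\frac{F_\alpha}{F_{\alpha+2n}},$$ so that the polynomials $$P_n^{(\alpha)}(x)=\sqrt{(-1)^{\alpha n}F_{\alpha+2n}/F_\alpha}\;p_n^{(\alpha)}(x)$$ satisfy $\int P_n^{(\alpha)}P_m^{(\alpha)}\,d\mu_\alpha=\delta_{n,m}$, i.e. they are the corresponding orthonormal polynomials.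
   Context: $F_n$ are the Fibonacci numbers ($F_0=0,F_1=1,F_{n+1}=F_n+F_{n-1}$). $\phi=(1+\sqrt5)/2$, $q=(1-\sqrt5)/(1+\sqrt5)$. The Fibonomial coefficients are $\binom{n}{k}_{\mathbb F}=\prod_{i=1}^k F_{n-i+1}/F_i$ for $0\le k\le n$ (empty product $=1$). With $(a;q)_k=\prod_{j=0}^{k-1}(1-aq^j)$, the little $q$-Jacobi polynomials are $$p_n(x;a,b;q)=\sum_{k=0}^n\frac{(q^{-n};q)_k(abq^{n+1};q)_k}{(q;q)_k(aq;q)_k}(xq)^k.$$ $\mu_\alpha=(1-q^\alpha)\sum_{k=0}^\infty q^{\alpha k}\delta_{q^k/\phi}$, a real-valued measure of total mass 1 ($\delta_a$ the unit point mass at $a$). The square root of a negative number is the principal one ($\sqrt{-t}=i\sqrt t$ for $t>0$). *)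

theory Defs
  imports "HOL-Analysis.Analysis" "HOL-Number_Theory.Fib"
begin

definition phi :: real where "phi = (1 + sqrt 5) / 2"

definition qq :: real where "qq = (1 - sqrt 5) / (1 + sqrt 5)"

text \<open>Fibonomial coefficient, intended for 0 \<le> k \<le> n.\<close>
definition fibonomial :: "nat \<Rightarrow> nat \<Rightarrow> real" where
  "fibonomial n k = (\<Prod>i=1..k. real (fib (n - i + 1)) / real (fib i))"

definition qpoch :: "real \<Rightarrow> real \<Rightarrow> nat \<Rightarrow> real" where
  "qpoch a q k = (\<Prod>j<k. 1 - a * q ^ j)"

definition little_q_jacobi :: "nat \<Rightarrow> real \<Rightarrow> real \<Rightarrow> real \<Rightarrow> real \<Rightarrow> real" where
  "little_q_jacobi n x a b q =
     (\<Sum>k=0..n. qpoch (q powi (- int n)) q k * qpoch (a * b * q ^ (n + 1)) q k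
                / (qpoch q q k * qpoch (a * q) q k) * (x * q) ^ k)"

definition pa :: "nat \<Rightarrow> nat \<Rightarrow> real \<Rightarrow> real" where
  "pa \<alpha> n x = fibonomial (\<alpha> + n - 1) n * little_q_jacobi n (x * phi) (qq ^ (\<alpha> - 1)) 1 qq"

text \<open>Integral against the real-valued (signed) discrete measure
  mu_alpha = (1 - q^alpha) sum_k q^(alpha k) delta_(q^k/phi).\<close>
definition mu_integral :: "nat \<Rightarrow> (real \<Rightarrow> 'a::real_normed_field) \<Rightarrow> 'a" where
  "mu_integral \<alpha> f = of_real (1 - qq ^ \<alpha>) * (\<Sum>k. of_real (qq ^ (\<alpha> * k)) * f (qq ^ k / phi))"

text \<open>Orthonormal polynomials P_n^(alpha) (complex-valued: principal square root).\<close>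
definition PN :: "nat \<Rightarrow> nat \<Rightarrow> real \<Rightarrow> complex" where
  "PN \<alpha> n x = csqrt (complex_of_real ((-1) ^ (\<alpha> * n) * real (fib (\<alpha> + 2 * n)) / real (fib \<alpha>)))
               * complex_of_real (pa \<alpha> n x)"

end

theory Submission
  imports Defs
begin


lemma sqrt5_gt2: "sqrt 5 > (2::real)"
  by (rule real_less_rsqrt) simp

lemma phi_gt1: "phi > 1" unfolding phi_def using sqrt5_gt2 by simp

lemma phi_pos: "phi > 0" using phi_gt1 by simp

lemma qq_phi: "qq * phi^2 = -1"
proof -
  have s: "sqrt 5 ^ 2 = (5::real)" by simp
  have "1 + sqrt 5 \<noteq> 0" using sqrt5_gt2 by simp
  then show ?thesis unfolding qq_def phi_def using s
    by (simp add: field_simps power2_eq_square)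
qed

lemma qq_eq: "qq = - 1 / phi^2"
  using qq_phi phi_pos by (simp add: field_simps)

lemma qq_neg: "qq < 0"
proof -
  have "1/phi^2 > 0" using phi_pos by simp
  then show ?thesis using qq_eq by linarith
qed
lemma qq_gt: "qq > -1"
proof -
  have "phi^2 > 1" using phi_gt1 by (simp add: one_less_power)
  then have "1 / phi^2 < 1" by (simp add: divide_less_eq)
  then show ?thesis using qq_eq by simp
qed
lemma qq_abs: "\<bar>qq\<bar> < 1" using qq_neg qq_gt by simp
lemma qq_nz: "qq \<noteq> 0" using qq_neg by simp

lemma qq_pow_ne1: "j > 0 \<Longrightarrow> qq ^ j \<noteq> 1"
proof -
  assume "j > 0"
  have "\<bar>qq ^ j\<bar> < 1" using qq_abs \<open>j>0\<close> by (simp add: power_abs power_less_one_iff)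
  then show ?thesis by auto
qed

lemma fib_q: "real (fib j) * sqrt 5 = phi ^ j * (1 - qq ^ j)"
proof -
  define ps where "ps = (1 - sqrt 5) / 2"
  have f: "real (fib j) = (phi ^ j - ps ^ j) / sqrt 5"
    using fib_closed_form[of j] unfolding phi_def ps_def by simp
  have "ps = qq * phi"
    using sqrt5_gt2 unfolding ps_def phi_def qq_def
    by (simp add: field_simps)
  then show ?thesis using f sqrt5_gt2 by (simp add: power_mult_distrib field_simps)
qed



lemma qpoch_0[simp]: "qpoch a q 0 = 1" unfolding qpoch_def by simp

lemma qpoch_Suc: "qpoch a q (Suc k) = qpoch a q k * (1 - a * q ^ k)"
  unfolding qpoch_def by simp

lemma qpoch_Suc': "qpoch a q (Suc k) = (1 - a) * qpoch (a * q) q k"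
  by (induction k) (simp_all add: qpoch_Suc mult.assoc mult.left_commute)

lemma qpoch_add: "qpoch a q (m + k) = qpoch a q m * qpoch (a * q ^ m) q k"
  by (induction k) (simp_all add: qpoch_Suc power_add mult.assoc)

lemma qpoch_nz: "(\<And>j. j < k \<Longrightarrow> a * q ^ j \<noteq> 1) \<Longrightarrow> qpoch a q k \<noteq> 0"
  unfolding qpoch_def by (auto simp: prod_zero_iff)

lemma qq_pow_nz: "(qq::real) ^ j \<noteq> 0" using qq_nz by simp

lemma qpoch_qq_nz: "m \<ge> 1 \<Longrightarrow> qpoch (qq ^ m) qq k \<noteq> 0"
  by (rule qpoch_nz) (use qq_pow_ne1[of "m + _"] in \<open>auto simp: power_add\<close>)

lemma qpoch_qq_nz1: "qpoch qq qq k \<noteq> 0"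
  using qpoch_qq_nz[of 1] by simp

definition rr :: real where "rr = 1 / qq"

lemma rr_qq: "rr * qq = 1" unfolding rr_def using qq_nz by simp

lemma rr_pow_qq: "rr ^ n * qq ^ n = 1"
  by (metis power_mult_distrib power_one rr_qq)

definition tc :: "nat \<Rightarrow> nat \<Rightarrow> real" where
  "tc n i = qpoch (rr ^ n) qq i / qpoch qq qq i"

lemma tc_0[simp]: "tc n 0 = 1" unfolding tc_def by simp

lemma tc_zero: "i > n \<Longrightarrow> tc n i = 0"
proof -
  assume "i > n"
  have "qpoch (rr ^ n) qq i = 0" unfolding qpoch_def
    using \<open>i > n\<close> rr_pow_qq[of n] by (auto simp: prod_zero_iff intro!: bexI[of _ n])
  then show ?thesis unfolding tc_def by simp
qed

lemma tc_rec: "tc (Suc n) (Suc i) = tc n (Suc i) - rr ^ Suc n * tc n i"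
proof -
  have e1: "qpoch (rr ^ Suc n) qq (Suc i) = (1 - rr ^ Suc n) * qpoch (rr ^ n) qq i"
  proof -
    have h: "rr ^ Suc n * qq = rr ^ n" using rr_qq by (simp add: algebra_simps)
    show ?thesis using qpoch_Suc'[of "rr ^ Suc n" qq i] unfolding h .
  qed
  have e2: "qpoch (rr ^ n) qq (Suc i) = qpoch (rr ^ n) qq i * (1 - rr ^ n * qq ^ i)"
    by (rule qpoch_Suc)
  have e3: "qpoch qq qq (Suc i) = qpoch qq qq i * (1 - qq * qq ^ i)"
    by (rule qpoch_Suc)
  have nz1: "qpoch qq qq i \<noteq> 0" by (rule qpoch_qq_nz1)
  have nz2: "1 - qq * qq ^ i \<noteq> 0" using qq_pow_ne1[of "Suc i"] by simp
  have key: "rr ^ Suc n * (qq * qq ^ i) = rr ^ n * qq ^ i"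
    using rr_qq by (simp add: algebra_simps)
  show ?thesis unfolding tc_def e1 e2 e3 using nz1 nz2 qq_nz
    unfolding power_Suc rr_def by (simp add: field_simps)
qed

lemma tc_sum_step:
  "(\<Sum>i=0..Suc n. tc (Suc n) i * g i) =
     (\<Sum>i=0..n. tc n i * g i) - rr ^ Suc n * (\<Sum>i=0..n. tc n i * g (Suc i))"
proof -
  have "(\<Sum>i=0..Suc n. tc (Suc n) i * g i) = g 0 + (\<Sum>i=0..n. tc (Suc n) (Suc i) * g (Suc i))"
    by (subst sum.atLeast0_atMost_Suc_shift) simp
  also have "\<dots> = g 0 + (\<Sum>i=0..n. tc n (Suc i) * g (Suc i))
                 - rr ^ Suc n * (\<Sum>i=0..n. tc n i * g (Suc i))"
    by (simp add: tc_rec algebra_simps sum_subtractf sum_distrib_left)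
  also have "g 0 + (\<Sum>i=0..n. tc n (Suc i) * g (Suc i)) = (\<Sum>i=0..Suc n. tc n i * g i)"
    by (subst sum.atLeast0_atMost_Suc_shift) simp
  also have "\<dots> = (\<Sum>i=0..n. tc n i * g i)"
    using tc_zero[of n "Suc n"] by simp
  finally show ?thesis .
qed

lemma tc_binom: "(\<Sum>i=0..n. tc n i * z ^ i) = (\<Prod>l=1..n. 1 - z * rr ^ l)"
proof (induction n)
  case 0 then show ?case by simp
next
  case (Suc n)
  have "(\<Sum>i=0..Suc n. tc (Suc n) i * z ^ i) = (\<Sum>i=0..n. tc n i * z ^ i) - rr ^ Suc n * (\<Sum>i=0..n. tc n i * z ^ Suc i)"
    by (rule tc_sum_step)
  also have "(\<Sum>i=0..n. tc n i * z ^ Suc i) = z * (\<Sum>i=0..n. tc n i * z ^ i)"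
    by (simp add: sum_distrib_left algebra_simps)
  finally show ?case using Suc by (simp add: algebra_simps)
qed

lemma tc_binom_zero: "1 \<le> s \<Longrightarrow> s \<le> n \<Longrightarrow> (\<Sum>i=0..n. tc n i * (qq ^ s) ^ i) = 0"
proof -
  have h: "qq ^ s * rr ^ s = 1" using rr_pow_qq[of s] by (simp only: mult.commute)
  assume "1 \<le> s" "s \<le> n"
  then show ?thesis by (subst tc_binom) (auto simp: prod_zero_iff h intro!: bexI[of _ s])
qed

lemma tc_Z:
  assumes "finite L"
  shows "1 \<le> s \<Longrightarrow> s + card L \<le> n \<Longrightarrow>
    (\<Sum>i=0..n. tc n i * (qq ^ s) ^ i * (\<Prod>l\<in>L. 1 - f l * qq ^ i)) = 0"
  using assms
proof (induction L arbitrary: s rule: finite_induct)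
  case empty then show ?case using tc_binom_zero by simp
next
  case (insert x F)
  have "(\<Sum>i=0..n. tc n i * (qq ^ s) ^ i * (\<Prod>l\<in>insert x F. 1 - f l * qq ^ i))
     = (\<Sum>i=0..n. tc n i * (qq ^ s) ^ i * (\<Prod>l\<in>F. 1 - f l * qq ^ i))
       - f x * (\<Sum>i=0..n. tc n i * (qq ^ Suc s) ^ i * (\<Prod>l\<in>F. 1 - f l * qq ^ i))"
    using insert.hyps
    by (simp add: sum_distrib_left sum_subtractf[symmetric] algebra_simps power_mult_distrib)
  also have "\<dots> = 0"
  proof -
    have "(\<Sum>i=0..n. tc n i * (qq ^ Suc s) ^ i * (\<Prod>l\<in>F. 1 - f l * qq ^ i)) = 0"
      using insert.prems insert.hyps by (intro insert.IH) auto
    moreover have "(\<Sum>i=0..n. tc n i * (qq ^ s) ^ i * (\<Prod>l\<in>F. 1 - f l * qq ^ i)) = 0"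
      using insert.prems insert.hyps by (intro insert.IH) auto
    ultimately show ?thesis by simp
  qed
  finally show ?case .
qed



lemma tc_R:
  "(\<And>l. b * qq ^ l \<noteq> 1) \<Longrightarrow>
   (\<Sum>i=0..n. tc n i * qq ^ i / (1 - b * qq ^ i)) = b ^ n * qpoch qq qq n / qpoch b qq (Suc n)"
proof (induction n arbitrary: b)
  case 0 then show ?case by (simp add: qpoch_Suc)
next
  case (Suc n)
  have hb: "\<And>l. (b * qq) * qq ^ l \<noteq> 1" using Suc.prems[of "Suc _"] by (simp add: mult.assoc)
  have "(\<Sum>i=0..Suc n. tc (Suc n) i * (qq ^ i / (1 - b * qq ^ i))) =
        (\<Sum>i=0..n. tc n i * (qq ^ i / (1 - b * qq ^ i))) - rr ^ Suc n * (\<Sum>i=0..n. tc n i * (qq ^ Suc i / (1 - b * qq ^ Suc i)))"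
    by (rule tc_sum_step)
  also have "(\<Sum>i=0..n. tc n i * (qq ^ Suc i / (1 - b * qq ^ Suc i))) = qq * (\<Sum>i=0..n. tc n i * qq ^ i / (1 - (b * qq) * qq ^ i))"
    by (simp add: sum_distrib_left algebra_simps)
  finally have e: "(\<Sum>i=0..Suc n. tc (Suc n) i * qq ^ i / (1 - b * qq ^ i)) =
     b ^ n * qpoch qq qq n / qpoch b qq (Suc n) - rr ^ Suc n * qq * ((b * qq) ^ n * qpoch qq qq n / qpoch (b * qq) qq (Suc n))"
    using Suc.IH[OF Suc.prems] Suc.IH[OF hb] by (simp add: mult.assoc)
  define X where "X = qpoch b qq (Suc n)"
  define Y where "Y = qpoch (b * qq) qq (Suc n)"
  define C where "C = qpoch qq qq n"
  have Z1: "qpoch b qq (Suc (Suc n)) = X * (1 - b * qq ^ Suc n)" unfolding X_def by (rule qpoch_Suc)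
  have Z2: "qpoch b qq (Suc (Suc n)) = (1 - b) * Y" unfolding Y_def by (rule qpoch_Suc')
  have nz: "qpoch b qq (Suc (Suc n)) \<noteq> 0" using Suc.prems by (intro qpoch_nz) auto
  have Xn: "X \<noteq> 0" "1 - b * qq ^ Suc n \<noteq> 0" using nz Z1 by auto
  have Yn: "Y \<noteq> 0" "1 - b \<noteq> 0" using nz Z2 by auto
  have pw: "rr ^ Suc n * qq * (b * qq) ^ n = b ^ n"
  proof -
    have "rr ^ Suc n * qq * (b * qq) ^ n = b ^ n * (rr ^ Suc n * qq ^ Suc n)"
      by (simp only: power_mult_distrib power_Suc mult_ac)
    then show ?thesis by (simp only: rr_pow_qq mult_1_right)
  qed
  have "b ^ n * C / X - rr ^ Suc n * qq * ((b * qq) ^ n * C / Y) = b ^ n * C / X - b ^ n * C / Y"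
    using pw by (simp add: mult.assoc[symmetric])
  also have "\<dots> = b ^ n * C * ((1 - b * qq ^ Suc n) - (1 - b)) / ((1 - b) * Y)"
  proof -
    have E: "X * (1 - b * qq ^ Suc n) = (1 - b) * Y" using Z1 Z2 by simp
    have inv: "1 / X = (1 - b * qq ^ Suc n) / ((1 - b) * Y)"
      using E Xn Yn by (simp add: field_simps)
    have "b ^ n * C / X - b ^ n * C / Y = b ^ n * C * (1 / X) - b ^ n * C / Y" by simp
    also have "\<dots> = b ^ n * C * ((1 - b * qq ^ Suc n) / ((1 - b) * Y)) - b ^ n * C * ((1 - b) / ((1 - b) * Y))"
      unfolding inv using Yn by simp
    finally show ?thesis by (simp add: diff_divide_distrib right_diff_distrib)
  qed
  also have "\<dots> = b ^ Suc n * (C * (1 - qq * qq ^ n)) / qpoch b qq (Suc (Suc n))"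
    using Z2 by (simp add: algebra_simps)
  finally show ?case using e unfolding X_def[symmetric] Y_def[symmetric] C_def[symmetric]
    by (simp add: qpoch_Suc[of qq qq n] C_def)
qed

lemma tc_W:
  assumes "finite L" "b \<noteq> 0" "\<And>i. 1 - b * qq ^ i \<noteq> 0"
  shows "card L \<le> n \<Longrightarrow>
    (\<Sum>i=0..n. tc n i * qq ^ i * (\<Prod>l\<in>L. 1 - f l * qq ^ i) / (1 - b * qq ^ i)) =
    (\<Prod>l\<in>L. 1 - f l / b) * (\<Sum>i=0..n. tc n i * qq ^ i / (1 - b * qq ^ i))"
  using assms(1)
proof (induction L rule: finite_induct)
  case empty then show ?case by simp
next
  case (insert x F)
  have pf: "\<And>i. (1 - f x * qq ^ i) / (1 - b * qq ^ i) = f x / b + (1 - f x / b) / (1 - b * qq ^ i)"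
    using assms(2,3) by (simp add: field_simps)
  have "(\<Sum>i=0..n. tc n i * qq ^ i * (\<Prod>l\<in>insert x F. 1 - f l * qq ^ i) / (1 - b * qq ^ i))
      = (\<Sum>i=0..n. tc n i * qq ^ i * (\<Prod>l\<in>F. 1 - f l * qq ^ i) * ((1 - f x * qq ^ i) / (1 - b * qq ^ i)))"
    using insert.hyps by (intro sum.cong) (simp_all add: algebra_simps)
  also have "\<dots> = f x / b * (\<Sum>i=0..n. tc n i * (qq ^ 1) ^ i * (\<Prod>l\<in>F. 1 - f l * qq ^ i))
      + (1 - f x / b) * (\<Sum>i=0..n. tc n i * qq ^ i * (\<Prod>l\<in>F. 1 - f l * qq ^ i) / (1 - b * qq ^ i))"
    unfolding pf by (simp add: sum_distrib_left sum.distrib algebra_simps)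
  also have "(\<Sum>i=0..n. tc n i * (qq ^ 1) ^ i * (\<Prod>l\<in>F. 1 - f l * qq ^ i)) = 0"
    using insert.prems insert.hyps by (intro tc_Z) auto
  finally show ?case using insert by simp
qed



definition cc :: "nat \<Rightarrow> nat \<Rightarrow> nat \<Rightarrow> real" where
  "cc \<alpha> n i = qpoch (rr ^ n) qq i * qpoch (qq ^ (\<alpha> + n)) qq i / (qpoch qq qq i * qpoch (qq ^ \<alpha>) qq i)"

lemma lqj_cc:
  assumes "\<alpha> \<ge> 1"
  shows "little_q_jacobi n y (qq ^ (\<alpha> - 1)) 1 qq = (\<Sum>i=0..n. cc \<alpha> n i * (y * qq) ^ i)"
proof -
  have e1: "qq powi (- int n) = rr ^ n"
    by (simp add: power_int_minus_divide rr_def power_one_over)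
  have e2: "qq ^ (\<alpha> - 1) * 1 * qq ^ (n + 1) = qq ^ (\<alpha> + n)"
    using assms by (cases \<alpha>) (simp_all add: power_add)
  have e3: "qq ^ (\<alpha> - 1) * qq = qq ^ \<alpha>"
    using assms by (simp flip: power_Suc2)
  show ?thesis unfolding little_q_jacobi_def e1 e2 e3 cc_def by simp
qed

lemma cc_tc:
  assumes "\<alpha> \<ge> 1"
  shows "cc \<alpha> n i * qpoch (qq ^ \<alpha>) qq n = tc n i * qpoch (qq ^ \<alpha> * qq ^ i) qq n"
proof -
  have "qpoch (qq ^ \<alpha>) qq n * qpoch (qq ^ (\<alpha> + n)) qq i = qpoch (qq ^ \<alpha>) qq i * qpoch (qq ^ \<alpha> * qq ^ i) qq n"
    using qpoch_add[of "qq ^ \<alpha>" qq n i] qpoch_add[of "qq ^ \<alpha>" qq i n]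
    by (simp add: power_add add.commute)
  moreover have "qpoch (qq ^ \<alpha>) qq i \<noteq> 0" "qpoch qq qq i \<noteq> 0"
    using assms qpoch_qq_nz qpoch_qq_nz1 by auto
  ultimately show ?thesis unfolding cc_def tc_def by (simp add: field_simps)
qed

lemma qqA_abs: "\<alpha> \<ge> 1 \<Longrightarrow> \<bar>qq ^ \<alpha> * qq ^ j\<bar> < 1"
proof -
  assume "\<alpha> \<ge> 1"
  have "\<bar>qq ^ (\<alpha> + j)\<bar> < 1" using qq_abs \<open>\<alpha> \<ge> 1\<close> by (simp add: power_abs power_less_one_iff)
  then show ?thesis by (simp add: power_add)
qed

lemma qqA_ne1: "\<alpha> \<ge> 1 \<Longrightarrow> 1 - qq ^ \<alpha> * qq ^ j \<noteq> 0"
  using qqA_abs[of \<alpha> j] by auto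

definition Sf :: "nat \<Rightarrow> nat \<Rightarrow> nat \<Rightarrow> real" where
  "Sf \<alpha> n j = (\<Sum>i=0..n. cc \<alpha> n i * qq ^ i / (1 - qq ^ \<alpha> * qq ^ (i + j)))"

lemma Sf_qpoch:
  assumes "\<alpha> \<ge> 1"
  shows "qpoch (qq ^ \<alpha>) qq n * Sf \<alpha> n j =
    (\<Sum>i=0..n. tc n i * qq ^ i * (\<Prod>l\<in>{..<n}. 1 - (qq ^ \<alpha> * qq ^ l) * qq ^ i) / (1 - (qq ^ \<alpha> * qq ^ j) * qq ^ i))"
  unfolding Sf_def sum_distrib_left
proof (intro sum.cong refl)
  fix i
  have "qpoch (qq ^ \<alpha>) qq n * (cc \<alpha> n i * qq ^ i / (1 - qq ^ \<alpha> * qq ^ (i + j)))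
       = (cc \<alpha> n i * qpoch (qq ^ \<alpha>) qq n) * qq ^ i / (1 - qq ^ \<alpha> * qq ^ (i + j))" by simp
  also have "\<dots> = tc n i * qq ^ i * qpoch (qq ^ \<alpha> * qq ^ i) qq n / (1 - (qq ^ \<alpha> * qq ^ j) * qq ^ i)"
    unfolding cc_tc[OF assms] by (simp add: power_add algebra_simps)
  also have "qpoch (qq ^ \<alpha> * qq ^ i) qq n = (\<Prod>l\<in>{..<n}. 1 - (qq ^ \<alpha> * qq ^ l) * qq ^ i)"
    unfolding qpoch_def by (simp add: algebra_simps)
  finally show "qpoch (qq ^ \<alpha>) qq n * (cc \<alpha> n i * qq ^ i / (1 - qq ^ \<alpha> * qq ^ (i + j))) =
    tc n i * qq ^ i * (\<Prod>l\<in>{..<n}. 1 - (qq ^ \<alpha> * qq ^ l) * qq ^ i) / (1 - (qq ^ \<alpha> * qq ^ j) * qq ^ i)" .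
qed

lemma Sf_orth:
  assumes "\<alpha> \<ge> 1" "j < n"
  shows "Sf \<alpha> n j = 0"
proof -
  let ?f = "\<lambda>i l. 1 - (qq ^ \<alpha> * qq ^ l) * qq ^ i"
  have "qpoch (qq ^ \<alpha>) qq n * Sf \<alpha> n j = (\<Sum>i=0..n. tc n i * (qq ^ 1) ^ i * (\<Prod>l\<in>{..<n} - {j}. ?f i l))"
    unfolding Sf_qpoch[OF assms(1)]
  proof (intro sum.cong refl)
    fix i
    have "(\<Prod>l\<in>{..<n}. ?f i l) = ?f i j * (\<Prod>l\<in>{..<n} - {j}. ?f i l)"
      using assms(2) by (intro prod.remove) auto
    moreover have "?f i j \<noteq> 0" using qqA_ne1[OF assms(1), of "j + i"] by (simp add: power_add mult.assoc)
    ultimately show "tc n i * qq ^ i * (\<Prod>l\<in>{..<n}. ?f i l) / ?f i j = tc n i * (qq ^ 1) ^ i * (\<Prod>l\<in>{..<n} - {j}. ?f i l)"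
      by simp
  qed
  also have "\<dots> = 0"
    using assms(2) by (intro tc_Z) auto
  finally show ?thesis using qpoch_qq_nz[OF assms(1)] by simp
qed

lemma Sf_norm:
  assumes "\<alpha> \<ge> 1"
  shows "qpoch (qq ^ \<alpha>) qq n * Sf \<alpha> n n =
     qpoch (rr ^ n) qq n * ((qq ^ \<alpha> * qq ^ n) ^ n * qpoch qq qq n / qpoch (qq ^ \<alpha> * qq ^ n) qq (Suc n))"
proof -
  have b0: "qq ^ \<alpha> * qq ^ n \<noteq> 0" using qq_nz by simp
  have b1: "\<And>i. 1 - (qq ^ \<alpha> * qq ^ n) * qq ^ i \<noteq> 0"
    using qqA_ne1[OF assms] by (metis power_add mult.assoc)
  have b2: "\<And>l. (qq ^ \<alpha> * qq ^ n) * qq ^ l \<noteq> 1" using b1 by (metis eq_iff_diff_eq_0)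
  have "qpoch (qq ^ \<alpha>) qq n * Sf \<alpha> n n = (\<Prod>l\<in>{..<n}. 1 - (qq ^ \<alpha> * qq ^ l) / (qq ^ \<alpha> * qq ^ n)) *
      (\<Sum>i=0..n. tc n i * qq ^ i / (1 - (qq ^ \<alpha> * qq ^ n) * qq ^ i))"
    unfolding Sf_qpoch[OF assms] by (rule tc_W) (use b0 b1 in auto)
  also have "(\<Prod>l\<in>{..<n}. 1 - (qq ^ \<alpha> * qq ^ l) / (qq ^ \<alpha> * qq ^ n)) = qpoch (rr ^ n) qq n"
    unfolding qpoch_def
  proof (intro prod.cong refl)
    fix l
    show "1 - (qq ^ \<alpha> * qq ^ l) / (qq ^ \<alpha> * qq ^ n) = 1 - rr ^ n * qq ^ l"
      using qq_nz by (simp add: rr_def power_one_over)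
  qed
  also have "(\<Sum>i=0..n. tc n i * qq ^ i / (1 - (qq ^ \<alpha> * qq ^ n) * qq ^ i)) =
      (qq ^ \<alpha> * qq ^ n) ^ n * qpoch qq qq n / qpoch (qq ^ \<alpha> * qq ^ n) qq (Suc n)"
    by (rule tc_R) (rule b2)
  finally show ?thesis .
qed



lemma pa_at:
  assumes "\<alpha> \<ge> 1"
  shows "pa \<alpha> n (qq ^ k / phi) = fibonomial (\<alpha> + n - 1) n * (\<Sum>i=0..n. cc \<alpha> n i * qq ^ i * (qq ^ i) ^ k)"
proof -
  have "\<And>i. (qq ^ k / phi * phi * qq) ^ i = qq ^ i * (qq ^ i) ^ k"
    using phi_pos by (simp add: power_mult_distrib flip: power_mult) (simp add: mult.commute)
  then show ?thesis unfolding pa_def lqj_cc[OF assms] by (simp add: mult.assoc)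
qed

lemma pa_series:
  assumes "\<alpha> \<ge> 1"
  shows "(\<lambda>k. qq ^ (\<alpha> * k) * (pa \<alpha> n (qq ^ k / phi) * pa \<alpha> m (qq ^ k / phi))) sums
     (fibonomial (\<alpha> + n - 1) n * fibonomial (\<alpha> + m - 1) m * (\<Sum>j=0..m. cc \<alpha> m j * qq ^ j * Sf \<alpha> n j))"
proof -
  define Fn where "Fn = fibonomial (\<alpha> + n - 1) n"
  define Fm where "Fm = fibonomial (\<alpha> + m - 1) m"
  define C where "C = (\<lambda>i j. Fn * Fm * (cc \<alpha> n i * qq ^ i) * (cc \<alpha> m j * qq ^ j))"
  have tm: "qq ^ (\<alpha> * k) * (pa \<alpha> n (qq ^ k / phi) * pa \<alpha> m (qq ^ k / phi)) =
     (\<Sum>i=0..n. \<Sum>j=0..m. C i j * (qq ^ \<alpha> * qq ^ (i + j)) ^ k)" for k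
  proof -
    have "qq ^ (\<alpha> * k) * (pa \<alpha> n (qq ^ k / phi) * pa \<alpha> m (qq ^ k / phi)) =
      (qq ^ \<alpha>) ^ k * (Fn * (\<Sum>i=0..n. cc \<alpha> n i * qq ^ i * (qq ^ i) ^ k)) * (Fm * (\<Sum>j=0..m. cc \<alpha> m j * qq ^ j * (qq ^ j) ^ k))"
      unfolding pa_at[OF assms] Fn_def Fm_def by (simp add: power_mult)
    also have "\<dots> = Fn * Fm * (qq ^ \<alpha>) ^ k * ((\<Sum>i=0..n. cc \<alpha> n i * qq ^ i * (qq ^ i) ^ k) * (\<Sum>j=0..m. cc \<alpha> m j * qq ^ j * (qq ^ j) ^ k))"
      by (simp add: algebra_simps)
    also have "\<dots> = (\<Sum>i=0..n. \<Sum>j=0..m. C i j * (qq ^ \<alpha> * qq ^ (i + j)) ^ k)"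
      unfolding sum_product
      unfolding C_def sum_distrib_left
      by (intro sum.cong refl) (simp add: power_mult_distrib power_add algebra_simps)
    finally show ?thesis .
  qed
  have "(\<lambda>k. \<Sum>i=0..n. \<Sum>j=0..m. C i j * (qq ^ \<alpha> * qq ^ (i + j)) ^ k) sums
        (\<Sum>i=0..n. \<Sum>j=0..m. C i j * (1 / (1 - qq ^ \<alpha> * qq ^ (i + j))))"
  proof (intro sums_sum sums_mult)
    fix i j
    show "(\<lambda>k. (qq ^ \<alpha> * qq ^ (i + j)) ^ k) sums (1 / (1 - qq ^ \<alpha> * qq ^ (i + j)))"
      using geometric_sums[of "qq ^ \<alpha> * qq ^ (i + j)"] qqA_abs[OF assms, of "i + j"] by simp
  qed
  also have "(\<Sum>i=0..n. \<Sum>j=0..m. C i j * (1 / (1 - qq ^ \<alpha> * qq ^ (i + j)))) =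
     Fn * Fm * (\<Sum>j=0..m. cc \<alpha> m j * qq ^ j * Sf \<alpha> n j)"
    unfolding Sf_def C_def sum_distrib_left
    by (subst sum.swap) (intro sum.cong refl, simp add: algebra_simps)
  finally show ?thesis unfolding tm Fn_def Fm_def .
qed



lemma fib_real: "real (fib j) = phi ^ j * (1 - qq ^ j) / sqrt 5"
  using fib_q[of j] sqrt5_gt2 by (simp add: field_simps)

lemma fib_pos_real: "j \<ge> 1 \<Longrightarrow> real (fib j) > 0"
  using fib_neq_0_nat[of j] by simp

lemma fibonomial_Suc: "k < m \<Longrightarrow> fibonomial m (Suc k) = fibonomial m k * (real (fib (m - k)) / real (fib (Suc k)))"
  unfolding fibonomial_def by (simp add: prod.nat_ivl_Suc' Suc_diff_Suc)

lemma fibonomial_qpoch: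
  "k \<le> m \<Longrightarrow> fibonomial m k * qpoch qq qq k * phi ^ (k * k) = phi ^ (k * m) * qpoch (qq ^ (m + 1 - k)) qq k"
proof (induction k)
  case 0 then show ?case by (simp add: fibonomial_def)
next
  case (Suc k)
  then obtain d where m: "m = k + 1 + d" by (metis Suc_eq_plus1 le_iff_add)
  have mk: "m - k = Suc d" "m + 1 - k = Suc (Suc d)" "m + 1 - Suc k = Suc d" using m by auto
  have IH: "fibonomial m k * qpoch qq qq k * phi ^ (k * k) = phi ^ (k * m) * qpoch (qq ^ Suc (Suc d)) qq k"
  proof -
    have "k \<le> m" using Suc.prems by simp
    from Suc.IH[OF this] show ?thesis unfolding mk(2) .
  qed
  have q1: "qpoch (qq ^ Suc d) qq (Suc k) = (1 - qq ^ Suc d) * qpoch (qq ^ Suc (Suc d)) qq k"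
    using qpoch_Suc'[of "qq ^ Suc d" qq k] by (simp add: mult.commute)
  have q2: "qpoch qq qq (Suc k) = qpoch qq qq k * (1 - qq ^ Suc k)"
    using qpoch_Suc[of qq qq k] by simp
  have f1: "real (fib (Suc d)) = phi ^ Suc d * (1 - qq ^ Suc d) / sqrt 5" by (rule fib_real)
  have f2: "real (fib (Suc k)) = phi ^ Suc k * (1 - qq ^ Suc k) / sqrt 5" by (rule fib_real)
  have nz: "1 - qq ^ Suc k \<noteq> 0" using qq_pow_ne1[of "Suc k"] by simp
  have s5: "sqrt 5 \<noteq> 0" by simp
  have pp: "phi \<noteq> 0" using phi_pos by simp
  have "fibonomial m (Suc k) * qpoch qq qq (Suc k) * phi ^ (Suc k * Suc k)
     = (fibonomial m k * qpoch qq qq k * phi ^ (k * k)) * (real (fib (Suc d)) / real (fib (Suc k)) * (1 - qq ^ Suc k) * phi ^ (k + k + 1))"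
  proof -
    have "Suc k * Suc k = k * k + (k + k + 1)" by simp
    then have pe: "phi ^ (Suc k * Suc k) = phi ^ (k * k) * phi ^ (k + k + 1)" by (simp only: power_add)
    show ?thesis
      unfolding fibonomial_Suc[of k m, OF \<open>Suc k \<le> m\<close>[unfolded Suc_le_eq]] q2 mk(1) pe
      by (simp only: ac_simps)
  qed
  also have "real (fib (Suc d)) / real (fib (Suc k)) * (1 - qq ^ Suc k) * phi ^ (k + k + 1) = phi ^ (Suc d + k) * (1 - qq ^ Suc d)"
    unfolding f1 f2 using nz s5 pp by (simp add: field_simps power_add)
  finally have L: "fibonomial m (Suc k) * qpoch qq qq (Suc k) * phi ^ (Suc k * Suc k) =
      phi ^ (k * m) * qpoch (qq ^ Suc (Suc d)) qq k * (phi ^ (Suc d + k) * (1 - qq ^ Suc d))"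
    unfolding IH .
  have "Suc k * m = k * m + (Suc d + k)" using m by simp
  then have pe2: "phi ^ (Suc k * m) = phi ^ (k * m) * phi ^ (Suc d + k)" by (simp only: power_add)
  show ?case unfolding L mk(3) q1 pe2 by (simp only: ac_simps)
qed



definition Pr :: "nat \<Rightarrow> real" where "Pr n = (\<Prod>l=1..n. rr ^ l)"

lemma Q_eq: "qpoch (rr ^ n) qq n = (-1) ^ n * Pr n * qpoch qq qq n"
proof (induction n)
  case 0 then show ?case by (simp add: Pr_def)
next
  case (Suc n)
  have h: "rr ^ Suc n * qq = rr ^ n" using rr_qq by (simp add: algebra_simps)
  have "qpoch (rr ^ Suc n) qq (Suc n) = (1 - rr ^ Suc n) * qpoch (rr ^ n) qq n"
    using qpoch_Suc'[of "rr ^ Suc n" qq n] unfolding h .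
  also have "1 - rr ^ Suc n = (- (rr ^ Suc n)) * (1 - qq * qq ^ n)"
    using rr_pow_qq[of "Suc n"] by (simp add: algebra_simps)
  finally show ?case unfolding Suc Pr_def
    by (simp add: prod.nat_ivl_Suc' qpoch_Suc[of qq qq n] algebra_simps)
qed

lemma Pr_sq: "(Pr n)^2 * qq ^ (n * (n + 1)) = 1"
proof (induction n)
  case 0 then show ?case by (simp add: Pr_def)
next
  case (Suc n)
  have e: "Suc n * (Suc n + 1) = n * (n + 1) + (Suc n + Suc n)" by simp
  have "(Pr (Suc n))^2 * qq ^ (Suc n * (Suc n + 1)) =
        ((Pr n)^2 * qq ^ (n * (n + 1))) * (rr ^ Suc n * qq ^ Suc n) * (rr ^ Suc n * qq ^ Suc n)"
    unfolding Pr_def e by (simp add: prod.nat_ivl_Suc' power_add power2_eq_square algebra_simps)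
  then show ?case by (simp only: Suc.IH rr_pow_qq mult_1_left mult_1_right)
qed

lemma norm_value:
  assumes "\<alpha> \<ge> 1"
  shows "(1 - qq ^ \<alpha>) * ((fibonomial (\<alpha> + n - 1) n)^2 * (cc \<alpha> n n * qq ^ n * Sf \<alpha> n n)) =
         (-1) ^ (\<alpha> * n) * real (fib \<alpha>) / real (fib (\<alpha> + 2 * n))"
proof -
  obtain a where a: "\<alpha> = Suc a" using assms by (cases \<alpha>) auto
  define A where "A = qq ^ \<alpha>"
  define B where "B = qq ^ \<alpha> * qq ^ n"
  define K where "K = qpoch qq qq n"
  define Q where "Q = qpoch (rr ^ n) qq n"
  define Aq where "Aq = qpoch A qq n"
  define Bq where "Bq = qpoch B qq n"
  define Fn where "Fn = fibonomial (\<alpha> + n - 1) n"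
  define V where "V = Fn^2 * (cc \<alpha> n n * qq ^ n * Sf \<alpha> n n)"
  have Kn: "K \<noteq> 0" unfolding K_def by (rule qpoch_qq_nz1)
  have Aqn: "Aq \<noteq> 0" unfolding Aq_def A_def using assms by (rule qpoch_qq_nz)
  have Bqn: "Bq \<noteq> 0" unfolding Bq_def B_def using qpoch_qq_nz[of "\<alpha> + n" n] assms
    by (simp add: power_add)
  have Bn: "1 - B * qq ^ n \<noteq> 0" unfolding B_def using qqA_ne1[OF assms, of "n + n"]
    by (simp add: power_add mult.assoc)
  have phn: "phi \<noteq> 0" using phi_pos by simp
  have c1: "cc \<alpha> n n * Aq = (Q / K) * Bq"
    using cc_tc[OF assms, of n n] unfolding Aq_def Bq_def A_def B_def tc_def Q_def K_def by simp
  have c2: "Aq * Sf \<alpha> n n = Q * (B ^ n * K / (Bq * (1 - B * qq ^ n)))"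
    using Sf_norm[OF assms, of n] unfolding Aq_def Bq_def A_def B_def Q_def K_def
    by (simp add: qpoch_Suc)
  have c3: "Fn * K * phi ^ (n * n) = phi ^ (n * (\<alpha> + n - 1)) * Aq"
    using fibonomial_qpoch[of n "\<alpha> + n - 1"] assms unfolding Fn_def K_def Aq_def A_def by simp
  have m1: "((-1::real)^n)^2 = 1" by (simp flip: power_mult add: mult.commute[of n] power_mult)
  have c4: "Q^2 = (Pr n)^2 * K^2" unfolding Q_def K_def Q_eq power_mult_distrib m1 by simp
  define E where "E = phi ^ (n * (\<alpha> + n - 1))"
  define Pn where "Pn = phi ^ (n * n)"
  have c3': "Fn * K * Pn = E * Aq" using c3 unfolding E_def Pn_def .
  have "V * Aq^2 = Fn^2 * qq ^ n * (cc \<alpha> n n * Aq) * (Aq * Sf \<alpha> n n)"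
    unfolding V_def by (simp add: power2_eq_square algebra_simps)
  also have "\<dots> = Fn^2 * qq ^ n * Q^2 * B ^ n / (1 - B * qq ^ n)"
    unfolding c1 c2 using Kn Bqn Bn by (simp add: power2_eq_square field_simps)
  finally have v1: "V * Aq^2 * (K^2 * Pn^2) = (Fn * K * Pn)^2 * qq ^ n * Q^2 * B ^ n / (1 - B * qq ^ n)"
    by (simp add: power_mult_distrib algebra_simps)
  then have "Aq^2 * (V * (K^2 * Pn^2)) = Aq^2 * (E^2 * qq ^ n * Q^2 * B ^ n / (1 - B * qq ^ n))"
    unfolding c3' by (simp add: power_mult_distrib algebra_simps)
  then have v2: "V * (K^2 * Pn^2) = E^2 * qq ^ n * Q^2 * B ^ n / (1 - B * qq ^ n)"
    using Aqn by (subst (asm) mult_left_cancel) auto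
  have Bpow: "B ^ n = A ^ n * qq ^ (n * n)" unfolding B_def A_def by (simp add: power_mult_distrib power_mult)
  have qnn: "qq ^ n * qq ^ (n * n) = qq ^ (n * (n + 1))" by (simp add: power_add[symmetric] algebra_simps)
  have "K^2 * (V * Pn^2) = K^2 * (E^2 * A ^ n * ((Pr n)^2 * (qq ^ n * qq ^ (n * n))) / (1 - B * qq ^ n))"
    using v2 unfolding c4 Bpow by (simp add: algebra_simps)
  then have "K^2 * (V * Pn^2) = K^2 * (E^2 * A ^ n / (1 - B * qq ^ n))"
    by (simp only: qnn Pr_sq mult_1_right)
  then have v3: "V * Pn^2 = E^2 * A ^ n / (1 - B * qq ^ n)"
    using Kn by (subst (asm) mult_left_cancel) auto
  have "n * (\<alpha> + n - 1) = n * a + n * n" using a by (simp add: algebra_simps)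
  then have "E = phi ^ (n * a) * Pn" unfolding E_def Pn_def by (simp add: power_add)
  then have "Pn^2 * V = Pn^2 * ((phi ^ (n * a))^2 * A ^ n / (1 - B * qq ^ n))"
    using v3 by (simp add: power_mult_distrib algebra_simps)
  moreover have "Pn \<noteq> 0" unfolding Pn_def using phn by simp
  ultimately have "V = (phi ^ (n * a))^2 * A ^ n / (1 - B * qq ^ n)"
    by (subst (asm) mult_left_cancel) auto
  then have v4: "V = phi ^ (2 * (n * a)) * A ^ n / (1 - B * qq ^ n)"
    by (simp add: power_mult[symmetric] mult.commute[of 2])
  have qphi: "(qq * phi ^ 2) ^ (n * a) = (-1) ^ (n * a)" using qq_phi by simp
  have v5: "phi ^ (2 * (n * a)) * A ^ n = (-1) ^ (n * a) * qq ^ n"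
  proof -
    have "A ^ n = qq ^ (n * a) * qq ^ n" unfolding A_def a by (simp add: power_mult[symmetric] power_add[symmetric] algebra_simps)
    then have "phi ^ (2 * (n * a)) * A ^ n = (qq * phi ^ 2) ^ (n * a) * qq ^ n"
      by (simp add: power_mult_distrib power_mult[symmetric] algebra_simps)
    then show ?thesis using qphi by simp
  qed
  have Bq2: "B * qq ^ n = qq ^ (\<alpha> + 2 * n)" unfolding B_def by (simp add: power_add mult_2)
  have fa: "real (fib \<alpha>) = phi ^ \<alpha> * (1 - A) / sqrt 5" unfolding A_def by (rule fib_real)
  have fb: "real (fib (\<alpha> + 2 * n)) = phi ^ \<alpha> * phi ^ (2 * n) * (1 - qq ^ (\<alpha> + 2 * n)) / sqrt 5"
    using fib_real[of "\<alpha> + 2 * n"] by (simp add: power_add)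
  have qn: "qq ^ n * phi ^ (2 * n) = (-1) ^ n" using qq_phi by (simp add: power_mult power_mult_distrib[symmetric])
  have sgn: "(-1::real) ^ (\<alpha> * n) = (-1) ^ (n * a) * (-1) ^ n" unfolding a by (simp add: power_add algebra_simps)
  have nz2: "1 - qq ^ (\<alpha> + 2 * n) \<noteq> 0" using Bn Bq2 by simp
  have "(1 - A) * V = (-1) ^ (n * a) * qq ^ n * (1 - A) / (1 - qq ^ (\<alpha> + 2 * n))"
    unfolding v4 v5 Bq2 by simp
  also have "\<dots> = (-1) ^ (\<alpha> * n) * real (fib \<alpha>) / real (fib (\<alpha> + 2 * n))"
    unfolding fa fb sgn using nz2 phn qn[symmetric] by (simp add: field_simps)
  finally show ?thesis unfolding A_def V_def Fn_def .
qed



definition nv :: "nat \<Rightarrow> nat \<Rightarrow> nat \<Rightarrow> real" where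
  "nv \<alpha> n m = (if n = m then (-1) ^ (\<alpha> * n) * real (fib \<alpha>) / real (fib (\<alpha> + 2 * n)) else 0)"

lemma nv_sym: "nv \<alpha> n m = nv \<alpha> m n" unfolding nv_def by auto

lemma aux_div: "(a::real) \<noteq> 0 \<Longrightarrow> a * x = y \<Longrightarrow> x = y / a"
  by (simp add: field_simps)

lemma pa_sums_le:
  assumes "\<alpha> \<ge> 1" "m \<le> n"
  shows "(\<lambda>k. qq ^ (\<alpha> * k) * (pa \<alpha> n (qq ^ k / phi) * pa \<alpha> m (qq ^ k / phi))) sums (nv \<alpha> n m / (1 - qq ^ \<alpha>))"
proof -
  have A1: "1 - qq ^ \<alpha> \<noteq> 0" using qqA_ne1[OF assms(1), of 0] by simp
  have "fibonomial (\<alpha> + n - 1) n * fibonomial (\<alpha> + m - 1) m * (\<Sum>j=0..m. cc \<alpha> m j * qq ^ j * Sf \<alpha> n j)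
        = nv \<alpha> n m / (1 - qq ^ \<alpha>)"
  proof (cases "m = n")
    case True
    have "(\<Sum>j=0..n. cc \<alpha> n j * qq ^ j * Sf \<alpha> n j) = cc \<alpha> n n * qq ^ n * Sf \<alpha> n n"
    proof -
      have "(\<Sum>j=0..n. cc \<alpha> n j * qq ^ j * Sf \<alpha> n j) = cc \<alpha> n n * qq ^ n * Sf \<alpha> n n + (\<Sum>j\<in>{0..n} - {n}. cc \<alpha> n j * qq ^ j * Sf \<alpha> n j)"
        by (subst sum.remove[of _ n]) auto
      also have "(\<Sum>j\<in>{0..n} - {n}. cc \<alpha> n j * qq ^ j * Sf \<alpha> n j) = 0"
        using Sf_orth[OF assms(1)] by (intro sum.neutral) auto
      finally show ?thesis by simp
    qed
    moreover have "fibonomial (\<alpha> + n - 1) n * fibonomial (\<alpha> + n - 1) n * (cc \<alpha> n n * qq ^ n * Sf \<alpha> n n) = nv \<alpha> n n / (1 - qq ^ \<alpha>)"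
      using norm_value[OF assms(1), of n] A1 unfolding nv_def
      by (intro aux_div) (simp_all add: power2_eq_square)
    ultimately show ?thesis using True by simp
  next
    case False
    have "(\<Sum>j=0..m. cc \<alpha> m j * qq ^ j * Sf \<alpha> n j) = 0"
      using Sf_orth[OF assms(1)] assms(2) False by (intro sum.neutral) auto
    then show ?thesis using False unfolding nv_def by simp
  qed
  then show ?thesis using pa_series[OF assms(1), of n m] by simp
qed

lemma pa_sums:
  assumes "\<alpha> \<ge> 1"
  shows "(\<lambda>k. qq ^ (\<alpha> * k) * (pa \<alpha> n (qq ^ k / phi) * pa \<alpha> m (qq ^ k / phi))) sums (nv \<alpha> n m / (1 - qq ^ \<alpha>))"
proof (cases "m \<le> n")
  case True then show ?thesis using pa_sums_le[OF assms] by simp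
next
  case False
  then have "(\<lambda>k. qq ^ (\<alpha> * k) * (pa \<alpha> m (qq ^ k / phi) * pa \<alpha> n (qq ^ k / phi))) sums (nv \<alpha> m n / (1 - qq ^ \<alpha>))"
    using pa_sums_le[OF assms, of n m] by simp
  then show ?thesis by (simp add: mult.commute nv_sym)
qed

lemma mu_pa:
  assumes "\<alpha> \<ge> 1"
  shows "mu_integral \<alpha> (\<lambda>x. pa \<alpha> n x * pa \<alpha> m x) = nv \<alpha> n m"
proof -
  have A1: "1 - qq ^ \<alpha> \<noteq> 0" using qqA_ne1[OF assms(1), of 0] by simp
  have "(\<Sum>k. qq ^ (\<alpha> * k) * (pa \<alpha> n (qq ^ k / phi) * pa \<alpha> m (qq ^ k / phi))) = nv \<alpha> n m / (1 - qq ^ \<alpha>)"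
    using sums_unique[OF pa_sums[OF assms, of n m]] by simp
  then show ?thesis unfolding mu_integral_def using A1 by simp
qed



lemma neg1_sq: "((-1::real)^k)^2 = 1"
  by (simp flip: power_mult add: mult.commute[of k] power_mult)

lemma mu_PN:
  assumes "\<alpha> \<ge> 1"
  shows "mu_integral \<alpha> (\<lambda>x. PN \<alpha> n x * PN \<alpha> m x) = (if n = m then 1 else 0)"
proof -
  define c where "c = (\<lambda>n. csqrt (complex_of_real ((-1) ^ (\<alpha> * n) * real (fib (\<alpha> + 2 * n)) / real (fib \<alpha>))))"
  have A1: "1 - qq ^ \<alpha> \<noteq> 0" using qqA_ne1[OF assms(1), of 0] by simp
  have "(\<lambda>k. c n * c m * of_real (qq ^ (\<alpha> * k) * (pa \<alpha> n (qq ^ k / phi) * pa \<alpha> m (qq ^ k / phi)))) sums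
        (c n * c m * of_real (nv \<alpha> n m / (1 - qq ^ \<alpha>)))"
    by (intro sums_mult sums_of_real pa_sums[OF assms])
  note sm = this
  have T: "complex_of_real (qq ^ (\<alpha> * k)) * (PN \<alpha> n (qq ^ k / phi) * PN \<alpha> m (qq ^ k / phi)) =
     c n * c m * of_real (qq ^ (\<alpha> * k) * (pa \<alpha> n (qq ^ k / phi) * pa \<alpha> m (qq ^ k / phi)))" for k
    unfolding PN_def c_def by (simp only: of_real_mult ac_simps)
  have "(\<lambda>k. complex_of_real (qq ^ (\<alpha> * k)) * (PN \<alpha> n (qq ^ k / phi) * PN \<alpha> m (qq ^ k / phi))) sums
        (c n * c m * of_real (nv \<alpha> n m / (1 - qq ^ \<alpha>)))"
  proof -
    have eqf: "(\<lambda>k. complex_of_real (qq ^ (\<alpha> * k)) * (PN \<alpha> n (qq ^ k / phi) * PN \<alpha> m (qq ^ k / phi))) =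
       (\<lambda>k. c n * c m * of_real (qq ^ (\<alpha> * k) * (pa \<alpha> n (qq ^ k / phi) * pa \<alpha> m (qq ^ k / phi))))"
      by (rule ext) (rule T)
    show ?thesis unfolding eqf by (rule sm)
  qed
  then have S: "(\<Sum>k. complex_of_real (qq ^ (\<alpha> * k)) * (PN \<alpha> n (qq ^ k / phi) * PN \<alpha> m (qq ^ k / phi))) =
        c n * c m * of_real (nv \<alpha> n m / (1 - qq ^ \<alpha>))"
    by (rule sums_unique[symmetric])
  have e: "mu_integral \<alpha> (\<lambda>x. PN \<alpha> n x * PN \<alpha> m x) = c n * c m * of_real (nv \<alpha> n m)"
  proof -
    have "mu_integral \<alpha> (\<lambda>x. PN \<alpha> n x * PN \<alpha> m x) = of_real (1 - qq ^ \<alpha>) * (c n * c m * of_real (nv \<alpha> n m / (1 - qq ^ \<alpha>)))"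
      unfolding mu_integral_def S ..
    also have "\<dots> = c n * c m * of_real ((1 - qq ^ \<alpha>) * (nv \<alpha> n m / (1 - qq ^ \<alpha>)))"
      by (simp only: of_real_mult ac_simps)
    also have "(1 - qq ^ \<alpha>) * (nv \<alpha> n m / (1 - qq ^ \<alpha>)) = nv \<alpha> n m" using A1 by simp
    finally show ?thesis .
  qed
  show ?thesis
  proof (cases "n = m")
    case True
    have f1: "real (fib \<alpha>) > 0" "real (fib (\<alpha> + 2 * n)) > 0" using fib_pos_real assms by auto
    have m1: "((-1::real)^(\<alpha> * n))^2 = 1" by (rule neg1_sq)
    have "c n * c n = complex_of_real ((-1) ^ (\<alpha> * n) * real (fib (\<alpha> + 2 * n)) / real (fib \<alpha>))"
    proof -
      have "c n * c n = (c n)^2" by (simp only: power2_eq_square)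
      also have "\<dots> = complex_of_real ((-1) ^ (\<alpha> * n) * real (fib (\<alpha> + 2 * n)) / real (fib \<alpha>))"
        unfolding c_def by (rule power2_csqrt)
      finally show ?thesis .
    qed
    note cc = this
    define X where "X = (-1) ^ (\<alpha> * n) * real (fib (\<alpha> + 2 * n)) / real (fib \<alpha>)"
    have "X * nv \<alpha> n n = ((-1)^(\<alpha> * n))^2 * (real (fib (\<alpha> + 2 * n)) / real (fib \<alpha>) * (real (fib \<alpha>) / real (fib (\<alpha> + 2 * n))))"
      unfolding X_def nv_def by (simp add: power2_eq_square algebra_simps)
    also have "\<dots> = 1" using f1 unfolding m1 by simp
    finally have X1: "X * nv \<alpha> n n = 1" .
    have "c n * c n * of_real (nv \<alpha> n n) = of_real (X * nv \<alpha> n n)"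
      unfolding cc X_def by (simp only: of_real_mult)
    also have "\<dots> = 1" unfolding X1 by simp
    finally show ?thesis using e True by simp
  next
    case False then show ?thesis using e unfolding nv_def by simp
  qed
qed



lemma cc_Suc:
  assumes "\<alpha> \<ge> 1"
  shows "cc \<alpha> n (Suc k) = cc \<alpha> n k * ((1 - rr ^ n * qq ^ k) * (1 - qq ^ (\<alpha> + n) * qq ^ k) / ((1 - qq * qq ^ k) * (1 - qq ^ \<alpha> * qq ^ k)))"
proof -
  have n1: "qpoch qq qq k \<noteq> 0" "qpoch (qq ^ \<alpha>) qq k \<noteq> 0" using qpoch_qq_nz1 qpoch_qq_nz assms by auto
  have n2: "1 - qq * qq ^ k \<noteq> 0" using qq_pow_ne1[of "Suc k"] by simp
  have n3: "1 - qq ^ \<alpha> * qq ^ k \<noteq> 0" using qqA_ne1[OF assms] by simp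
  show ?thesis unfolding cc_def qpoch_Suc using n1 n2 n3 by (simp add: field_simps)
qed

lemma fibonomial_up: "n \<le> M \<Longrightarrow> fibonomial (Suc M) n * real (fib (Suc M - n)) = fibonomial M n * real (fib (Suc M))"
proof (induction n)
  case 0 then show ?case by (simp add: fibonomial_def)
next
  case (Suc n)
  have f: "real (fib (Suc n)) \<noteq> 0" using fib_pos_real[of "Suc n"] by simp
  have e: "Suc M - Suc n = M - n" by simp
  have "fibonomial (Suc M) (Suc n) * real (fib (Suc M - Suc n)) =
        (fibonomial (Suc M) n * real (fib (Suc M - n))) * real (fib (M - n)) / real (fib (Suc n))"
    using Suc.prems unfolding e by (subst fibonomial_Suc) auto
  also have "\<dots> = fibonomial M n * real (fib (Suc M)) * real (fib (M - n)) / real (fib (Suc n))"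
    using Suc by simp
  also have "\<dots> = fibonomial M (Suc n) * real (fib (Suc M))"
    using Suc.prems by (subst fibonomial_Suc) auto
  finally show ?case .
qed

lemma sign_step:
  assumes "k < n"
  shows "(-1::real) ^ (Suc k * n - (Suc k choose 2)) = (-1) ^ (k * n - (k choose 2)) * (-1) ^ (n - k)"
proof -
  have c: "Suc k choose 2 = (k choose 2) + k"
    using binomial_Suc_Suc[of k 1] by (simp add: numeral_2_eq_2)
  have "k choose 2 \<le> k ^ 2"
  proof (cases "k < 2")
    case True then show ?thesis by (simp add: binomial_eq_0)
  next
    case False then show ?thesis by (intro binomial_le_pow) simp
  qed
  also have "k ^ 2 \<le> k * n" using assms by (simp add: power2_eq_square)
  finally have le: "k choose 2 \<le> k * n" .
  have "Suc k * n - (Suc k choose 2) = (k * n - (k choose 2)) + (n - k)"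
    unfolding c using le assms by simp
  then show ?thesis by (simp add: power_add)
qed

lemma rr_phi: "rr = - (phi ^ 2)"
  unfolding rr_def qq_eq using phi_pos by simp

lemma rho_eq:
  assumes "n = k + D"
  shows "(1 - rr ^ D) * phi * qq = (-1) ^ D * (phi ^ D * (1 - qq ^ D) / sqrt 5) / (phi ^ Suc k * (1 - qq ^ Suc k) / sqrt 5) * phi ^ n * (1 - qq ^ Suc k)"
proof -
  have pn: "phi \<noteq> 0" using phi_pos by simp
  have n2: "1 - qq ^ Suc k \<noteq> 0" using qq_pow_ne1[of "Suc k"] by simp
  define s where "s = (-1::real) ^ D"
  define P where "P = phi ^ D"
  have s2: "s * s = 1" unfolding s_def by (simp flip: power_add add: mult_2[symmetric])
  have Pn: "P \<noteq> 0" unfolding P_def using pn by simp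
  have r: "rr ^ D = s * P * P"
  proof -
    have "rr ^ D = (-1) ^ D * (phi ^ 2) ^ D" unfolding rr_phi by (rule power_minus)
    also have "(phi ^ 2) ^ D = phi ^ D * phi ^ D" by (simp add: power2_eq_square power_mult_distrib)
    finally show ?thesis unfolding s_def P_def by simp
  qed
  have q: "qq ^ D = s / (P * P)"
  proof -
    have "qq ^ D = (-1) ^ D * (1 / phi ^ 2) ^ D" unfolding qq_eq minus_divide_left[symmetric] by (rule power_minus)
    also have "(1 / phi ^ 2) ^ D = 1 / (phi ^ D * phi ^ D)" by (simp add: power2_eq_square power_mult_distrib power_divide)
    finally show ?thesis unfolding s_def P_def by simp
  qed
  have pk: "phi ^ n = P * phi ^ k" unfolding assms P_def by (simp add: power_add)
  have "(-1) ^ D * (phi ^ D * (1 - qq ^ D) / sqrt 5) / (phi ^ Suc k * (1 - qq ^ Suc k) / sqrt 5) * phi ^ n * (1 - qq ^ Suc k)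
     = s * (P * (1 - s / (P * P))) * P / phi"
    unfolding s_def[symmetric] P_def[symmetric] q pk using pn n2 by (simp add: field_simps)
  also have "\<dots> = (s * P * P - s * s) / phi" using Pn pn by (simp add: field_simps)
  also have "\<dots> = (1 - rr ^ D) * phi * qq" unfolding r s2 qq_eq using pn by (simp add: field_simps power2_eq_square)
  finally show ?thesis ..
qed



lemma aux2: "(u::real) \<noteq> 0 \<Longrightarrow> (S * p * u) * z / (u * w) = S * (p * z / w)"
  by (cases "w = 0") (simp_all add: field_simps)

lemma term_eq:
  assumes "\<alpha> \<ge> 1"
  shows "k \<le> n \<Longrightarrow> fibonomial (\<alpha> + n - 1) n * cc \<alpha> n k * (phi * qq) ^ k =
     (-1) ^ (k * n - (k choose 2)) * fibonomial n k * fibonomial (\<alpha> + n + k - 1) n"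
proof (induction k)
  case 0 then show ?case by (simp add: cc_def fibonomial_def)
next
  case (Suc k)
  then have kn: "k < n" by simp
  define D where "D = n - k"
  have nD: "n = k + D" unfolding D_def using kn by simp
  have Dpos: "D \<ge> 1" unfolding D_def using kn by simp
  define rho where "rho = (1 - rr ^ n * qq ^ k) * (1 - qq ^ (\<alpha> + n) * qq ^ k) / ((1 - qq * qq ^ k) * (1 - qq ^ \<alpha> * qq ^ k)) * (phi * qq)"
  have L: "fibonomial (\<alpha> + n - 1) n * cc \<alpha> n (Suc k) * (phi * qq) ^ Suc k =
        (fibonomial (\<alpha> + n - 1) n * cc \<alpha> n k * (phi * qq) ^ k) * rho"
    unfolding cc_Suc[OF assms] rho_def by (simp add: algebra_simps)
  have fu: "fibonomial (Suc (\<alpha> + n + k - 1)) n * real (fib (Suc (\<alpha> + n + k - 1) - n)) =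
        fibonomial (\<alpha> + n + k - 1) n * real (fib (Suc (\<alpha> + n + k - 1)))"
    using assms by (intro fibonomial_up) simp
  have e1: "Suc (\<alpha> + n + k - 1) = \<alpha> + n + k" using assms by simp
  have e2: "\<alpha> + n + Suc k - 1 = \<alpha> + n + k" using assms by simp
  have fpos: "real (fib (\<alpha> + k)) \<noteq> 0" "real (fib (Suc k)) \<noteq> 0" using fib_pos_real assms by auto
  have fu2: "fibonomial (\<alpha> + n + Suc k - 1) n = fibonomial (\<alpha> + n + k - 1) n * (real (fib (\<alpha> + n + k)) / real (fib (\<alpha> + k)))"
    using fu fpos unfolding e1 e2 by (simp add: field_simps)
  have R: "(-1) ^ (Suc k * n - (Suc k choose 2)) * fibonomial n (Suc k) * fibonomial (\<alpha> + n + Suc k - 1) n =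
     ((-1) ^ (k * n - (k choose 2)) * fibonomial n k * fibonomial (\<alpha> + n + k - 1) n) *
     (((-1) ^ D * (real (fib D) / real (fib (Suc k)))) * (real (fib (\<alpha> + n + k)) / real (fib (\<alpha> + k))))"
    unfolding sign_step[OF kn] fibonomial_Suc[OF kn] fu2 D_def[symmetric] by (simp add: algebra_simps)
  have rho2: "rho = ((-1) ^ D * (real (fib D) / real (fib (Suc k)))) * (real (fib (\<alpha> + n + k)) / real (fib (\<alpha> + k)))"
  proof -
    have a1: "rr ^ n * qq ^ k = rr ^ D" unfolding nD
      using rr_pow_qq[of k] by (simp add: power_add algebra_simps)
    have a2: "qq ^ (\<alpha> + n) * qq ^ k = qq ^ (\<alpha> + n + k)" by (simp add: power_add)
    have a3: "qq ^ \<alpha> * qq ^ k = qq ^ (\<alpha> + k)" by (simp add: power_add)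
    have a4: "qq * qq ^ k = qq ^ Suc k" by simp
    have n1: "1 - qq ^ (\<alpha> + k) \<noteq> 0" using qqA_ne1[OF assms, of k] by (simp add: power_add)
    have n2: "1 - qq ^ Suc k \<noteq> 0" using qq_pow_ne1[of "Suc k"] by simp
    have pn: "phi \<noteq> 0" using phi_pos by simp
    have ratio: "real (fib (\<alpha> + n + k)) / real (fib (\<alpha> + k)) = phi ^ n * (1 - qq ^ (\<alpha> + n + k)) / (1 - qq ^ (\<alpha> + k))"
      unfolding fib_real using pn n1 by (simp add: power_add field_simps)
    have re: "(1 - rr ^ D) * phi * qq = (-1) ^ D * (real (fib D) / real (fib (Suc k))) * phi ^ n * (1 - qq ^ Suc k)"
      using rho_eq[OF nD] unfolding fib_real by simp
    have "rho = ((1 - rr ^ D) * phi * qq) * (1 - qq ^ (\<alpha> + n + k)) / ((1 - qq ^ Suc k) * (1 - qq ^ (\<alpha> + k)))"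
      unfolding rho_def a1 a2 a3 a4 by (simp add: algebra_simps)
    also have "\<dots> = ((-1) ^ D * (real (fib D) / real (fib (Suc k)))) * (phi ^ n * (1 - qq ^ (\<alpha> + n + k)) / (1 - qq ^ (\<alpha> + k)))"
      unfolding re by (rule aux2) (rule n2)
    finally show ?thesis unfolding ratio .
  qed
  show ?case unfolding L R rho2 using Suc.IH kn by simp
qed

lemma explicit:
  assumes "\<alpha> \<ge> 1"
  shows "pa \<alpha> n x = (\<Sum>k=0..n. (-1) ^ (k * n - (k choose 2)) * fibonomial n k * fibonomial (\<alpha> + n + k - 1) n * x ^ k)"
proof -
  have "pa \<alpha> n x = (\<Sum>k=0..n. fibonomial (\<alpha> + n - 1) n * cc \<alpha> n k * (phi * qq) ^ k * x ^ k)"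
    unfolding pa_def lqj_cc[OF assms] sum_distrib_left
    by (intro sum.cong refl) (simp add: power_mult_distrib algebra_simps)
  also have "\<dots> = (\<Sum>k=0..n. (-1) ^ (k * n - (k choose 2)) * fibonomial n k * fibonomial (\<alpha> + n + k - 1) n * x ^ k)"
    by (intro sum.cong refl) (subst term_eq[OF assms], auto)
  finally show ?thesis .
qed


theorem theorem3p1:
  fixes \<alpha> :: nat
  assumes "\<alpha> \<ge> 1"
  shows "(\<forall>n x. pa \<alpha> n x =
            (\<Sum>k=0..n. (-1) ^ (k * n - (k choose 2)) * fibonomial n k
                         * fibonomial (\<alpha> + n + k - 1) n * x ^ k))
       \<and> (\<forall>n m. mu_integral \<alpha> (\<lambda>x. pa \<alpha> n x * pa \<alpha> m x) =
            (if n = m then (-1) ^ (\<alpha> * n) * real (fib \<alpha>) / real (fib (\<alpha> + 2 * n)) else 0))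
       \<and> (\<forall>n m. mu_integral \<alpha> (\<lambda>x. PN \<alpha> n x * PN \<alpha> m x) = (if n = m then 1 else 0))"
  using explicit[OF assms] mu_pa[OF assms] mu_PN[OF assms] unfolding nv_def by blast

end
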